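(* Let $A\in\mathbb{R}^{m\times n}$, $b\in\mathbb{R}^m$ with $Ax=b$ consistent, and let $\{x^k\}$, $\{s_k\}$, $\{\gamma_k\}$ be the sequences generated by the RIM-AS algorithm described in the context. For every $k\ge1$, writing $\underline{s_i}$ for the last component of $s_i$, the matrix $V_k^\top V_k$, where $V_k=(x^{j_k}-x^k,\dots,x^{k-1}-x^k)\in\mathbb{R}^{n\times(k-j_k)}$, is invertible and its inverse is $$C_k=C\big(\gamma_{j_k}\underline{s_{j_k}},\ldots,\gamma_{k-1}\underline{s_{k-1}}\big)\in\mathbb{R}^{(k-j_k)\times(k-j_k)}.$$
   Context: RIM-AS algorithm: given a probability space $(\Omega,\mathcal{F},\mathbf{P})$ of matrices in $\mathbb{R}^{m\times q}$, a positive integer $\ell$ and $x^0\in\operatorname{Range}(A^\top)$, for $k=0,1,\dots$: draw $S_k\in\Omega$ (redrawing until $S_k^\top(Ax^k-b)\neq0$); set $j_k=\max\{k-\ell+1,0\}$, $M_k=(x^{j_k}-x^k,\dots,x^{k-1}-x^k,-A^\top S_kS_k^\top(Ax^k-b))\in\mathbb{R}^{n\times(k-j_k+1)}$, $\gamma_k=\|S_k^\top(Ax^k-b)\|_2^2$; let $s_k$ solve $M_k^\top M_ks_k=\gamma_ke$ with $e$ the last standard unit vector of $\mathbb{R}^{k-j_k+1}$; set $x^{k+1}=x^k+M_ks_k$. For nonzero reals $\alpha_1,\dots,\alpha_p$, $C(\alpha_1,\dots,\alpha_p)$ is the symmetric tridiagonal $p\times p$ matrix with diagonal entries $C_{11}=\alpha_1^{-1}$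 and $C_{ii}=\alpha_{i-1}^{-1}+\alpha_i^{-1}$ for $2\le i\le p$, off-diagonal entries $C_{i,i+1}=C_{i+1,i}=-\alpha_i^{-1}$ for $1\le i\le p-1$, and all other entries zero. *)

theory Defs
  imports "Jordan_Normal_Form.Matrix"
begin

text \<open>Index j_k = max (k - l + 1) 0 (natural subtraction truncates at 0).\<close>
definition rim_j :: "nat \<Rightarrow> nat \<Rightarrow> nat" where
  "rim_j l k = k + 1 - l"

definition rim_res :: "real mat \<Rightarrow> real vec \<Rightarrow> real vec \<Rightarrow> real vec" where
  "rim_res A b x = A *\<^sub>v x - b"

definition rim_V :: "nat \<Rightarrow> (nat \<Rightarrow> real vec) \<Rightarrow> nat \<Rightarrow> nat \<Rightarrow> real mat" where
  "rim_V n x l k = mat_of_cols n (map (\<lambda>i. x i - x k) [rim_j l k..<k])"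

definition rim_M :: "nat \<Rightarrow> real mat \<Rightarrow> real vec \<Rightarrow> (nat \<Rightarrow> real mat) \<Rightarrow> (nat \<Rightarrow> real vec)
    \<Rightarrow> nat \<Rightarrow> nat \<Rightarrow> real mat" where
  "rim_M n A b S x l k = mat_of_cols n
     (map (\<lambda>i. x i - x k) [rim_j l k..<k] @
      [- ((transpose_mat A * S k * transpose_mat (S k)) *\<^sub>v rim_res A b (x k))])"

definition rim_gamma :: "real mat \<Rightarrow> real vec \<Rightarrow> (nat \<Rightarrow> real mat) \<Rightarrow> (nat \<Rightarrow> real vec) \<Rightarrow> nat \<Rightarrow> real" where
  "rim_gamma A b S x k =
     (let r = transpose_mat (S k) *\<^sub>v rim_res A b (x k) in r \<bullet> r)"

definition Ctri :: "real list \<Rightarrow> real mat" where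
  "Ctri \<alpha> = mat (length \<alpha>) (length \<alpha>) (\<lambda>(i,j).
     if i = j then (if i = 0 then 1 / \<alpha> ! 0 else 1 / \<alpha> ! (i - 1) + 1 / \<alpha> ! i)
     else if j = i + 1 then - 1 / \<alpha> ! i
     else if i = j + 1 then - 1 / \<alpha> ! j
     else 0)"

end

theory Submission imports Defs "Jordan_Normal_Form.Determinant" begin

lemma sum3:
  fixes h :: "nat \<Rightarrow> real"
  assumes "b < p" and z: "\<And>c. c < p \<Longrightarrow> c \<noteq> b \<Longrightarrow> c + 1 \<noteq> b \<Longrightarrow> c \<noteq> b + 1 \<Longrightarrow> h c = 0"
  shows "(\<Sum>c\<in>{0..<p}. h c) = (if 0 < b then h (b-1) else 0) + h b + (if b+1 < p then h (b+1) else 0)"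
proof -
  let ?T = "{c\<in>{0..<p}. c = b \<or> c + 1 = b \<or> c = b + 1}"
  have "(\<Sum>c\<in>{0..<p}. h c) = (\<Sum>c\<in>?T. h c)"
  proof (rule sum.mono_neutral_right)
    show "\<forall>c\<in>{0..<p} - ?T. h c = 0" using z by auto
  qed auto
  also have "\<dots> = (if 0 < b then h (b-1) else 0) + h b + (if b+1 < p then h (b+1) else 0)"
  proof (cases "0 < b")
    case True
    show ?thesis
    proof (cases "b+1<p")
      case True2: True
      have "?T = {b-1, b, b+1}" using True True2 by auto
      moreover have "b - 1 \<noteq> b" "b - 1 \<noteq> b + 1" using True by auto
      ultimately show ?thesis using True True2 by (simp add: add.assoc)
    next
      case False
      have "?T = {b-1, b}" using True False \<open>b<p\<close> by auto
      then show ?thesis using True False by simp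
    qed
  next
    case False
    show ?thesis
    proof (cases "b+1<p")
      case True2: True
      have "?T = {b, b+1}" using False True2 by auto
      then show ?thesis using False True2 by simp
    next
      case False2: False
      have "?T = {b}" using False False2 \<open>b<p\<close> by auto
      then show ?thesis using False False2 by simp
    qed
  qed
  finally show ?thesis .
qed

lemma tri_inv:
  fixes \<alpha> :: "real list" and \<sigma> :: "nat \<Rightarrow> real" and G :: "real mat"
  assumes p: "length \<alpha> = p" and pos: "\<And>i. i < p \<Longrightarrow> \<alpha> ! i > 0"
    and rec: "\<And>i. i < p \<Longrightarrow> \<sigma> i = \<alpha> ! i + \<sigma> (Suc i)" and sp: "\<sigma> p = 0"
    and G: "G \<in> carrier_mat p p" and Ge: "\<And>a c. a < p \<Longrightarrow> c < p \<Longrightarrow> G $$ (a, c) = \<sigma> (max a c)"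
  shows "G * Ctri \<alpha> = 1\<^sub>m p"
proof (rule eq_matI)
  show "dim_row (G * Ctri \<alpha>) = dim_row (1\<^sub>m p)" "dim_col (G * Ctri \<alpha>) = dim_col (1\<^sub>m p)"
    using G p by (auto simp: Ctri_def)
  fix a b assume a: "a < dim_row (1\<^sub>m p)" and b: "b < dim_col (1\<^sub>m p)"
  hence a: "a < p" and b: "b < p" by auto
  define Cf where "Cf = (\<lambda>c. if c = b then (if c = 0 then 1 / \<alpha> ! 0 else 1 / \<alpha> ! (c - 1) + 1 / \<alpha> ! c)
     else if b = c + 1 then - 1 / \<alpha> ! c
     else if c = b + 1 then - 1 / \<alpha> ! b
     else (0::real))"
  define h where "h = (\<lambda>c. \<sigma> (max a c) * Cf c)"
  have "(G * Ctri \<alpha>) $$ (a, b) = (\<Sum>c\<in>{0..<p}. G $$ (a, c) * Ctri \<alpha> $$ (c, b))"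
    using G a b p by (simp add: Ctri_def scalar_prod_def)
  also have "\<dots> = (\<Sum>c\<in>{0..<p}. h c)"
    using a b p by (intro sum.cong) (auto simp: Ge Ctri_def h_def Cf_def)
  also have "\<dots> = (if 0 < b then h (b-1) else 0) + h b + (if b+1 < p then h (b+1) else 0)"
    by (rule sum3[OF b]) (auto simp: h_def Cf_def)
  also have "\<dots> = (if 0 < b then h (b-1) else 0) + h b + \<sigma> (max a (b+1)) * (- 1 / \<alpha> ! b)"
  proof -
    have "\<sigma> (max a (b+1)) = 0" if "\<not> b + 1 < p"
    proof -
      have "b + 1 = p" using that b by linarith
      thus ?thesis using a sp by (simp add: max_def)
    qed
    thus ?thesis by (auto simp: h_def Cf_def)
  qed
  also have "\<dots> = 1\<^sub>m p $$ (a, b)"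
  proof -
    have pb: "\<alpha> ! b > 0" using pos b by auto
    have rb: "\<sigma> b = \<alpha> ! b + \<sigma> (Suc b)" using rec b by auto
    show ?thesis
    proof (cases "b = 0")
      case True
      then show ?thesis using a b pb rb
        by (cases "a = 0"; cases "a = 1") (auto simp: h_def Cf_def field_simps max_def)
    next
      case False
      have pb1: "\<alpha> ! (b-1) > 0" using pos b by auto
      have rb1: "\<sigma> (b-1) = \<alpha> ! (b-1) + \<sigma> b" using rec[of "b-1"] b False by auto
      consider "a < b" | "a = b" | "a > b" by linarith
      then show ?thesis
      proof cases
        case 1
        have "max a (b-1) = b - 1" "max a b = b" "max a (b+1) = b+1" using 1 by auto
        then show ?thesis using 1 a b pb rb pb1 rb1 False by (simp add: h_def Cf_def field_simps)
      next
        case 2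
        have "max a (b-1) = b" "max a (b+1) = b+1" using 2 by auto
        then show ?thesis using 2 a b pb rb pb1 rb1 False by (simp add: h_def Cf_def field_simps)
      next
        case 3
        have "max a (b-1) = a" "max a b = a" "max a (b+1) = a" using 3 by auto
        then show ?thesis using 3 a b pb rb pb1 rb1 False by (simp add: h_def Cf_def field_simps)
      qed
    qed
  qed
  finally show "(G * Ctri \<alpha>) $$ (a, b) = 1\<^sub>m p $$ (a, b)" .
qed


lemma sp_real_pos: fixes v :: "real vec" assumes "v \<in> carrier_vec n" "v \<noteq> 0\<^sub>v n"
  shows "v \<bullet> v > 0"
proof -
  have c: "conjugate v = v" by simp
  have "0 < v \<bullet> conjugate v" using conjugate_square_greater_0_vec[OF assms(1)] assms(2) by blast
  then show ?thesis unfolding c .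
qed

theorem lemma3p3:
  fixes m n q l :: nat
    and A :: "real mat" and b :: "real vec"
    and \<Omega> :: "real mat set"
    and S :: "nat \<Rightarrow> real mat"
    and x s :: "nat \<Rightarrow> real vec"
  assumes A: "A \<in> carrier_mat m n"
    and b: "b \<in> carrier_vec m"
    and consistent: "\<exists>z \<in> carrier_vec n. A *\<^sub>v z = b"
    and l: "l \<ge> 1"
    and Omega: "\<Omega> \<subseteq> carrier_mat m q"
    and S_in: "\<And>k. S k \<in> \<Omega>"
    and S_nz: "\<And>k. transpose_mat (S k) *\<^sub>v rim_res A b (x k) \<noteq> 0\<^sub>v q"
    and x0: "\<exists>y \<in> carrier_vec m. x 0 = transpose_mat A *\<^sub>v y"
    and s_dim: "\<And>k. s k \<in> carrier_vec (k - rim_j l k + 1)"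
    and s_solves: "\<And>k. (transpose_mat (rim_M n A b S x l k) * rim_M n A b S x l k) *\<^sub>v s k
                     = rim_gamma A b S x k \<cdot>\<^sub>v unit_vec (k - rim_j l k + 1) (k - rim_j l k)"
    and x_step: "\<And>k. x (Suc k) = x k + rim_M n A b S x l k *\<^sub>v s k"
    and k: "k \<ge> 1"
  shows "invertible_mat (transpose_mat (rim_V n x l k) * rim_V n x l k)
    \<and> inverts_mat (transpose_mat (rim_V n x l k) * rim_V n x l k)
         (Ctri (map (\<lambda>i. rim_gamma A b S x i * s i $ (i - rim_j l i)) [rim_j l k..<k]))
    \<and> inverts_mat (Ctri (map (\<lambda>i. rim_gamma A b S x i * s i $ (i - rim_j l i)) [rim_j l k..<k]))
         (transpose_mat (rim_V n x l k) * rim_V n x l k)"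
proof -
  have Mcar: "rim_M n A b S x l k \<in> carrier_mat n (k - rim_j l k + 1)" for k
    unfolding rim_M_def by (rule carrier_matI) auto
  have xc: "x k \<in> carrier_vec n" for k
  proof (induction k)
    case 0
    from x0 obtain y where "y \<in> carrier_vec m" "x 0 = transpose_mat A *\<^sub>v y" by auto
    then show ?case using A by auto
  next
    case (Suc k)
    then show ?case using x_step[of k] Mcar[of k] s_dim[of k] by (metis add_carrier_vec mult_mat_vec_carrier)
  qed
  define d where "d k = x (Suc k) - x k" for k
  have dc: "d k \<in> carrier_vec n" for k using xc unfolding d_def by auto
  have dM: "d k = rim_M n A b S x l k *\<^sub>v s k" for k
    unfolding d_def using x_step[of k] xc[of k] Mcar[of k] by auto
  have jk: "rim_j l k \<le> k" for k using l by (simp add: rim_j_def)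
  have comp: "(transpose_mat (rim_M n A b S x l k) * rim_M n A b S x l k *\<^sub>v s k) $ t
      = col (rim_M n A b S x l k) t \<bullet> d k" if "t < k - rim_j l k + 1" for k t
  proof -
    have "transpose_mat (rim_M n A b S x l k) * rim_M n A b S x l k *\<^sub>v s k
      = transpose_mat (rim_M n A b S x l k) *\<^sub>v d k"
      unfolding dM using Mcar[of k] s_dim[of k]
      by (subst assoc_mult_mat_vec) auto
    then show ?thesis using that Mcar[of k] by auto
  qed
  have colM: "col (rim_M n A b S x l k) t = x (rim_j l k + t) - x k" if "t < k - rim_j l k" for k t
    unfolding rim_M_def using that xc
    by (subst col_mat_of_cols) (auto simp: nth_append)
  have orth: "(x i - x k) \<bullet> d k = 0" if "rim_j l k \<le> i" "i \<le> k" for i k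
  proof (cases "i = k")
    case True
    then show ?thesis using minus_cancel_vec[OF xc[of k]] dc[of k] by simp
  next
    case False
    hence t: "i - rim_j l k < k - rim_j l k" using that by auto
    have "(x i - x k) \<bullet> d k = (transpose_mat (rim_M n A b S x l k) * rim_M n A b S x l k *\<^sub>v s k) $ (i - rim_j l k)"
      using comp[of "i - rim_j l k" k] colM[OF t] t that by auto
    also have "\<dots> = 0" unfolding s_solves using t by simp
    finally show ?thesis .
  qed
  have gpos: "rim_gamma A b S x k > 0" for k
  proof -
    have "S k \<in> carrier_mat m q" using S_in Omega by auto
    moreover have "rim_res A b (x k) \<in> carrier_vec m" unfolding rim_res_def using A b xc[of k] by auto
    ultimately have "transpose_mat (S k) *\<^sub>v rim_res A b (x k) \<in> carrier_vec q"
      by (metis transpose_carrier_mat mult_mat_vec_carrier)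
    from sp_real_pos[OF this S_nz[of k]] show ?thesis unfolding rim_gamma_def Let_def .
  qed
  have dnz: "d k \<noteq> 0\<^sub>v n" for k
  proof
    assume d0: "d k = 0\<^sub>v n"
    have t: "k - rim_j l k < k - rim_j l k + 1" by simp
    have "(transpose_mat (rim_M n A b S x l k) * rim_M n A b S x l k *\<^sub>v s k) $ (k - rim_j l k) = 0"
    proof -
      have "col (rim_M n A b S x l k) (k - rim_j l k) \<in> carrier_vec n"
        using col_dim[of "rim_M n A b S x l k"] Mcar[of k] by auto
      then show ?thesis using comp[OF t] d0 by simp
    qed
    moreover have "(transpose_mat (rim_M n A b S x l k) * rim_M n A b S x l k *\<^sub>v s k) $ (k - rim_j l k) = rim_gamma A b S x k"
      unfolding s_solves by simp
    ultimately show False using gpos[of k] by simp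
  qed
  have dd: "d k \<bullet> d k = rim_gamma A b S x k * s k $ (k - rim_j l k)" for k
  proof -
    have "d k \<bullet> d k = (transpose_mat (rim_M n A b S x l k) *\<^sub>v d k) \<bullet> s k"
      unfolding dM using Mcar[of k] s_dim[of k]
      by (subst transpose_vec_mult_scalar) auto
    also have "transpose_mat (rim_M n A b S x l k) *\<^sub>v d k = 
       rim_gamma A b S x k \<cdot>\<^sub>v unit_vec (k - rim_j l k + 1) (k - rim_j l k)"
      unfolding s_solves[symmetric] dM using Mcar[of k] s_dim[of k]
      by (subst assoc_mult_mat_vec) auto
    finally show ?thesis using s_dim[of k] by simp
  qed
  have ddpos: "d k \<bullet> d k > 0" for k using sp_real_pos[OF dc dnz] .
  define X where "X a c = x a \<bullet> x c" for a c
  have Xs: "X a c = X c a" for a c unfolding X_def using xc by (metis comm_scalar_prod)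
  have ex: "(x a - x c) \<bullet> (x e - x f) = X a e - X a f - X c e + X c f" for a c e f
    unfolding X_def
    apply (subst minus_scalar_prod_distrib[OF xc[of a] xc[of c]], (use xc in simp))
    apply (subst scalar_prod_minus_distrib[OF xc[of a] xc[of e] xc[of f]])
    apply (subst scalar_prod_minus_distrib[OF xc[of c] xc[of e] xc[of f]])
    by simp
  have orthX: "X i (Suc k) - X i k - X k (Suc k) + X k k = 0" if "rim_j l k \<le> i" "i \<le> k" for i k
    using orth[OF that] unfolding d_def ex .
  have P: "i' \<le> k' \<Longrightarrow> (\<forall>i. i \<le> i' \<longrightarrow> rim_j l k' \<le> i \<longrightarrow> (x i - x i') \<bullet> (x i' - x k') = 0)" for i' k'
  proof (induction k')
    case 0
    then show ?case unfolding ex by auto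
  next
    case (Suc k')
    show ?case
    proof (cases "i' = Suc k'")
      case True
      then show ?thesis unfolding ex by auto
    next
      case False
      hence le: "i' \<le> k'" using Suc by auto
      show ?thesis
      proof (intro allI impI)
        fix i assume i: "i \<le> i'" "rim_j l (Suc k') \<le> i"
        have j1: "rim_j l k' \<le> i" using i(2) by (simp add: rim_j_def)
        have IH: "X i i' - X i k' - X i' i' + X i' k' = 0" using Suc.IH[OF le] i(1) j1 unfolding ex by auto
        have o1: "X i (Suc k') - X i k' - X k' (Suc k') + X k' k' = 0" using orthX j1 i le by auto
        have o2: "X i' (Suc k') - X i' k' - X k' (Suc k') + X k' k' = 0" using orthX j1 i le by auto
        show "(x i - x i') \<bullet> (x i' - x (Suc k')) = 0" unfolding ex using IH o1 o2 by linarith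
      qed
    qed
  qed
  define N where "N i = (x i - x k) \<bullet> (x i - x k)" for i
  have Nk: "N k = 0" unfolding N_def ex by simp
  have Nrec: "N i = d i \<bullet> d i + N (Suc i)" if "rim_j l k \<le> i" "i < k" for i
  proof -
    have "(x i - x (Suc i)) \<bullet> (x (Suc i) - x k) = 0" using P[of "Suc i" k] that by auto
    then have "X i (Suc i) - X i k - X (Suc i) (Suc i) + X (Suc i) k = 0" unfolding ex .
    then show ?thesis unfolding N_def d_def ex using Xs[of i "Suc i"] Xs[of k i] Xs[of k "Suc i"] by linarith
  qed
  have Gent: "(x a - x k) \<bullet> (x c - x k) = N (max a c)" if "rim_j l k \<le> a" "a \<le> k" "rim_j l k \<le> c" "c \<le> k" for a c
  proof -
    have *: "(x a - x k) \<bullet> (x c - x k) = N c" if "rim_j l k \<le> a" "a \<le> c" "c \<le> k" for a c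
    proof -
      have "(x a - x c) \<bullet> (x c - x k) = 0" using P[of c k] that by auto
      then show ?thesis unfolding N_def ex using Xs[of k c] by linarith
    qed
    show ?thesis
    proof (cases "a \<le> c")
      case True
      then show ?thesis using * that by (simp add: max_def)
    next
      case False
      then have "(x c - x k) \<bullet> (x a - x k) = N a" using * that by auto
      then show ?thesis using False unfolding ex using Xs by (simp add: max_def)
    qed
  qed
  define jj where "jj = rim_j l k"
  define p where "p = k - jj"
  have jjp: "jj + p = k" using jk[of k] unfolding p_def jj_def by auto
  define L where "L = map (\<lambda>i. rim_gamma A b S x i * s i $ (i - rim_j l i)) [rim_j l k..<k]"
  define V where "V = rim_V n x l k"
  define G where "G = transpose_mat V * V"
  define \<sigma> where "\<sigma> i = N (jj + i)" for i
  have Lp: "length L = p" unfolding L_def p_def jj_def by simp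
  have Li: "L ! i = d (jj + i) \<bullet> d (jj + i)" if "i < p" for i
    using that unfolding L_def p_def jj_def by (simp add: dd)
  have Vc: "V \<in> carrier_mat n p" unfolding V_def rim_V_def p_def jj_def by (rule carrier_matI) auto
  have colV: "col V a = x (jj + a) - x k" if "a < p" for a
    unfolding V_def rim_V_def using that xc unfolding p_def jj_def
    by (subst col_mat_of_cols) auto
  have Gc: "G \<in> carrier_mat p p" unfolding G_def using Vc by auto
  have GC: "G * Ctri L = 1\<^sub>m p"
  proof (rule tri_inv[OF Lp])
    show "\<And>i. i < p \<Longrightarrow> 0 < L ! i" using Li ddpos by auto
    show "\<And>i. i < p \<Longrightarrow> \<sigma> i = L ! i + \<sigma> (Suc i)"
      using Li Nrec unfolding \<sigma>_def jj_def p_def by auto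
    show "\<sigma> p = 0" unfolding \<sigma>_def using jjp Nk by simp
    show "G \<in> carrier_mat p p" by (rule Gc)
    fix a c assume a: "a < p" and c: "c < p"
    have "G $$ (a, c) = col V a \<bullet> col V c" unfolding G_def using Vc a c by simp
    also have "\<dots> = (x (jj + a) - x k) \<bullet> (x (jj + c) - x k)" using colV a c by simp
    also have "\<dots> = N (max (jj + a) (jj + c))"
      by (rule Gent) (use a c jjp in \<open>auto simp: jj_def\<close>)
    also have "max (jj + a) (jj + c) = jj + max a c" by (simp add: max_def)
    finally show "G $$ (a, c) = \<sigma> (max a c)" unfolding \<sigma>_def .
  qed
  have Cc: "Ctri L \<in> carrier_mat p p" unfolding Ctri_def using Lp by auto
  have CG: "Ctri L * G = 1\<^sub>m p" by (rule mat_mult_left_right_inverse[OF Gc Cc GC])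
  have i1: "inverts_mat G (Ctri L)" unfolding inverts_mat_def using GC Gc by simp
  have i2: "inverts_mat (Ctri L) G" unfolding inverts_mat_def using CG Cc by simp
  have "invertible_mat G" unfolding invertible_mat_def using i1 i2 Gc by (auto simp: square_mat.simps)
  then show ?thesis using i1 i2 unfolding G_def V_def L_def by blast
qed

end
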